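(* Let $q$ be a positive integer and $\omega=e^{i\pi/q}$. Then $$\frac1q\sum_{k=0}^{q-1}\gamma(\omega^{2k+1})=\int_0^1\int_0^1\frac{1-x}{(1+x^qy^q)(-\log xy)}\,dx\,dy=\frac{1}{2q}\left[\psi\!\left(\frac{q+1}{2q}\right)-\psi\!\left(\frac{1}{2q}\right)\right]-\log\frac{\Gamma\left(\frac{1}{2q}\right)\Gamma\left(\frac{q+2}{2q}\right)}{\Gamma\left(\frac1q\right)\Gamma\left(\frac{q+1}{2q}\right)}.$$
   Context: $\gamma(z)=\sum_{n=1}^{\infty} z^{n-1}\left(\frac{1}{n}-\log\frac{n+1}{n}\right)$ for $|z|\le1$. $\Gamma$ is Euler's gamma function and $\psi=\Gamma'/\Gamma$ is the digamma function. *)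

theory Defs
  imports "HOL-Analysis.Analysis"
begin

text \<open>gamma(z) = sum_{n>=1} z^(n-1) (1/n - log((n+1)/n)), reindexed with m = n - 1.\<close>
definition gamma_series :: "complex \<Rightarrow> complex" where
  "gamma_series z = (\<Sum>m. z ^ m * (1 / of_nat (m + 1)
      - of_real (ln (real (m + 2) / real (m + 1)))))"

end

theory Submission
  imports Defs "HOL-Real_Asymp.Real_Asymp"
begin


definition hh :: "nat \<Rightarrow> nat \<Rightarrow> real \<Rightarrow> real \<Rightarrow> real \<Rightarrow> real" where
  "hh q i x y u = (1 - x) * (1 - (x*y)^q) * (x*y) powr (u + real (2*i*q))"

lemma int_u:
  fixes t K m :: real
  assumes t0: "0 \<le> t" and t1: "t < 1" and K: "0 \<le> K"
  shows "(\<integral>\<^sup>+u. ennreal (K * t powr (u + m)) * indicator {0..} u \<partial>lborel) = ennreal (K * t powr m / (- ln t))"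
proof (cases "t = 0")
  case True
  then show ?thesis by simp
next
  case False
  then have tp: "t > 0" using t0 by auto
  have lt: "ln t < 0" using tp t1 by simp
  have eq: "\<And>u. K * t powr (u + m) = K * exp ((u + m) * ln t)" using tp by (simp add: powr_def)
  have "(\<integral>\<^sup>+u. ennreal (K * exp ((u + m) * ln t)) * indicator {0..} u \<partial>lborel) =
        ennreal (0 - K * exp ((0 + m) * ln t) / ln t)"
  proof (rule nn_integral_FTC_atLeast)
    show "(\<lambda>u. K * exp ((u + m) * ln t)) \<in> borel_measurable borel" by measurable
    show "\<And>x. 0 \<le> x \<Longrightarrow> ((\<lambda>u. K * exp ((u + m) * ln t) / ln t) has_real_derivative K * exp ((x + m) * ln t)) (at x)"
      using lt by (auto intro!: derivative_eq_intros)
    show "\<And>x. 0 \<le> x \<Longrightarrow> 0 \<le> K * exp ((x + m) * ln t)" using K by simp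
    have "((\<lambda>u. exp ((u + m) * ln t)) \<longlongrightarrow> 0) at_top"
    proof (rule filterlim_compose[OF exp_at_bot])
      show "filterlim (\<lambda>u. (u + m) * ln t) at_bot at_top"
        using lt by real_asymp
    qed
    then have "((\<lambda>u. K * exp ((u + m) * ln t) / ln t) \<longlongrightarrow> K * 0 / ln t) at_top"
      using lt by (intro tendsto_intros) auto
    then show "((\<lambda>u. K * exp ((u + m) * ln t) / ln t) \<longlongrightarrow> 0) at_top" by simp
  qed
  then show ?thesis using tp by (simp add: eq powr_def)
qed

lemma powr_int01:
  fixes v :: real assumes "v > -1"
  shows "((\<lambda>y. y powr v) has_integral (1 / (v + 1))) {0..1}"
  using has_integral_powr_from_0[OF assms, of 1] by simp

lemma pow_powr: fixes y v :: real assumes "0 \<le> y" shows "y ^ q * y powr v = y powr (v + real q)"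
proof (cases "y = 0")
  case False
  then show ?thesis using assms by (simp add: powr_add powr_realpow)
qed simp

lemma Y_int:
  fixes x v :: real
  assumes x0: "0 \<le> x" and x1: "x \<le> 1" and v: "0 \<le> v"
  shows "((\<lambda>y. (1 - x) * (1 - (x*y)^q) * (x*y) powr v) has_integral
           ((1 - x) * x powr v * (1 / (v + 1) - x^q / (v + real q + 1)))) {0..1}"
proof -
  have "((\<lambda>y. (1 - x) * x powr v * (y powr v - x^q * y powr (v + real q))) has_integral
         ((1 - x) * x powr v * (1 / (v + 1) - x^q * (1 / (v + real q + 1))))) {0..1}"
    using v by (intro has_integral_mult_right has_integral_diff powr_int01) auto
  then have "((\<lambda>y. (1 - x) * x powr v * (y powr v - x^q * y powr (v + real q))) has_integral
         ((1 - x) * x powr v * (1 / (v + 1) - x^q / (v + real q + 1)))) {0..1}" by simp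
  then show ?thesis
  proof (rule has_integral_eq[rotated], goal_cases)
    case (1 y)
    then have y0: "0 \<le> y" by auto
    have "(1 - x) * (1 - (x*y)^q) * (x*y) powr v = (1 - x) * x powr v * (y powr v - x^q * (y^q * y powr v))"
      by (simp add: powr_mult power_mult_distrib algebra_simps)
    also have "y^q * y powr v = y powr (v + real q)" using y0 by (rule pow_powr)
    finally show ?case by (rule sym)
  qed
qed

definition GG :: "real \<Rightarrow> real" where "GG w = (1 / (w + 1) - 1 / (w + 2)) / (w + 1)"

lemma X_int:
  fixes v :: real
  assumes v: "0 \<le> v"
  shows "((\<lambda>x. (1 - x) * x powr v * (1 / (v + 1) - x^q / (v + real q + 1))) has_integral
           (GG v - GG (v + real q))) {0..1}"
proof -
  have "((\<lambda>x. x powr v * (1 / (v + 1)) - x powr (v + 1) * (1 / (v + 1))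
           - x powr (v + real (Suc 0 * q)) * (1 / (v + real q + 1)) + x powr (v + real (Suc q)) * (1 / (v + real q + 1))) has_integral
         (1 / (v + 1) * (1 / (v + 1)) - 1 / (v + 1 + 1) * (1 / (v + 1))
           - 1 / (v + real (Suc 0 * q) + 1) * (1 / (v + real q + 1)) + 1 / (v + real (Suc q) + 1) * (1 / (v + real q + 1)))) {0..1}"
    using v by (intro has_integral_mult_left has_integral_diff has_integral_add powr_int01) auto
  moreover have "1 / (v + 1) * (1 / (v + 1)) - 1 / (v + 1 + 1) * (1 / (v + 1))
           - 1 / (v + real (Suc 0 * q) + 1) * (1 / (v + real q + 1)) + 1 / (v + real (Suc q) + 1) * (1 / (v + real q + 1))
        = GG v - GG (v + real q)"
  proof -
    have "v + 1 \<noteq> 0" "v + 2 \<noteq> 0" "v + real q + 1 \<noteq> 0" "v + real q + 2 \<noteq> 0" using v by linarith+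
    have GG_alt: "GG w = 1/(w+1)*(1/(w+1)) - 1/(w+2)*(1/(w+1))" for w by (simp add: GG_def diff_divide_distrib)
    show ?thesis by (simp add: GG_alt algebra_simps)
  qed
  ultimately have I: "((\<lambda>x. x powr v * (1 / (v + 1)) - x powr (v + 1) * (1 / (v + 1))
           - x powr (v + real (Suc 0 * q)) * (1 / (v + real q + 1)) + x powr (v + real (Suc q)) * (1 / (v + real q + 1))) has_integral
         (GG v - GG (v + real q))) {0..1}" by simp
  show ?thesis
  proof (rule has_integral_eq[OF _ I], goal_cases)
    case (1 x)
    then have x0: "0 \<le> x" by auto
    have e1: "x powr (v + 1) = x ^ 1 * x powr v" using pow_powr[OF x0, of 1 v] by simp
    have e2: "x powr (v + real (Suc 0 * q)) = x ^ q * x powr v" using pow_powr[OF x0, of q v] by simp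
    have e3: "x powr (v + real (Suc q)) = x ^ Suc q * x powr v" using pow_powr[OF x0, of "Suc q" v] by simp
    show ?case unfolding e1 e2 e3 by (simp add: algebra_simps diff_divide_distrib add_divide_distrib)
  qed
qed

definition AA :: "real \<Rightarrow> real" where "AA c = 1 / c - ln ((c + 1) / c)"
definition Phi :: "real \<Rightarrow> real" where "Phi w = - 1 / (w + 1) - ln (w + 1) + ln (w + 2)"

lemma GG_eq: "w \<ge> 0 \<Longrightarrow> GG w = 1 / ((w + 1) * (w + 1) * (w + 2))"
  by (simp add: GG_def field_simps)

lemma GG_nonneg: "w \<ge> 0 \<Longrightarrow> GG w \<ge> 0"
  by (simp add: GG_eq)

lemma GG_mono: assumes "0 \<le> w" "w \<le> w'" shows "GG w' \<le> GG w"
proof -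
  have "(w + 1) * (w + 1) * (w + 2) \<le> (w' + 1) * (w' + 1) * (w' + 2)"
    using assms by (intro mult_mono) auto
  moreover have "0 < (w + 1) * (w + 1) * (w + 2)" using assms by auto
  ultimately show ?thesis using assms by (simp add: GG_eq divide_simps)
qed

lemma Phi_deriv0: assumes "w > -1"
  shows "((\<lambda>w. - 1 / (w + 1) - ln (w + 1) + ln (w + 2)) has_real_derivative (1 / ((w + 1) * (w + 1) * (w + 2)))) (at w)"
proof -
  have a: "w + 1 > 0" "w + 2 > 0" using assms by auto
  have "((\<lambda>w. - 1 / (w + 1) - ln (w + 1) + ln (w + 2)) has_real_derivative
        (1 / ((w + 1) * (w + 1)) - 1 / (w + 1) + 1 / (w + 2))) (at w)"
    using a apply (intro derivative_eq_intros refl)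
    apply auto
    done
  moreover have "1 / (a * a) - 1 / a + 1 / b = 1 / (a * a * b)" if "a > 0" "b = a + 1" for a b :: real
    using that by (simp add: field_simps)
  from this[of "w + 1" "w + 2"] a
  have "1 / ((w + 1) * (w + 1)) - 1 / (w + 1) + 1 / (w + 2) = 1 / ((w + 1) * (w + 1) * (w + 2))"
    by simp
  ultimately show ?thesis by simp
qed
lemma Phi_deriv: assumes "w \<ge> 0" shows "(Phi has_real_derivative GG w) (at w)"
  using Phi_deriv0[of w] assms unfolding Phi_def[abs_def] by (simp add: GG_eq)

lemma Phi_AA: "w \<ge> 0 \<Longrightarrow> Phi w = - AA (w + 1)"
  by (simp add: Phi_def AA_def ln_div add.commute)

lemma Phi_lim: "((\<lambda>u. Phi (u + c)) \<longlongrightarrow> 0) at_top"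
  unfolding Phi_def by real_asymp

lemma U_int:
  fixes m Q :: real
  assumes m: "0 \<le> m" and Q: "0 \<le> Q"
  shows "(\<integral>\<^sup>+u. ennreal (GG (u + m) - GG (u + m + Q)) * indicator {0..} u \<partial>lborel)
          = ennreal (AA (m + 1) - AA (m + Q + 1))"
proof -
  have "(\<integral>\<^sup>+u. ennreal (GG (u + m) - GG (u + m + Q)) * indicator {0..} u \<partial>lborel)
          = ennreal (0 - (Phi (0 + m) - Phi (0 + m + Q)))"
  proof (rule nn_integral_FTC_atLeast)
    show "(\<lambda>u. GG (u + m) - GG (u + m + Q)) \<in> borel_measurable borel"
      unfolding GG_def by measurable
    show "((\<lambda>u. Phi (u + m) - Phi (u + m + Q)) has_real_derivative GG (x + m) - GG (x + m + Q)) (at x)"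
      if "0 \<le> x" for x
      using that m Q
      by (auto intro!: derivative_eq_intros DERIV_chain2[OF Phi_deriv] simp: add.assoc)
    show "0 \<le> GG (x + m) - GG (x + m + Q)" if "0 \<le> x" for x
      using GG_mono[of "x + m" "x + m + Q"] that m Q by auto
    have "((\<lambda>u. Phi (u + m) - Phi (u + (m + Q))) \<longlongrightarrow> 0 - 0) at_top"
      by (intro tendsto_diff Phi_lim)
    then show "((\<lambda>u. Phi (u + m) - Phi (u + m + Q)) \<longlongrightarrow> 0) at_top" by (simp add: add.assoc)
  qed
  also have "0 - (Phi (0 + m) - Phi (0 + m + Q)) = AA (m + 1) - AA (m + Q + 1)"
    using m Q by (simp add: Phi_AA add.assoc add.commute add.left_commute)
  finally show ?thesis .
qed

lemma hh_nonneg: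
  assumes "0 \<le> x" "x \<le> 1" "0 \<le> y" "y \<le> 1"
  shows "0 \<le> hh q i x y u"
proof -
  have "x * y \<le> 1" using assms by (simp add: mult_le_one)
  then have "(x * y) ^ q \<le> 1" using assms by (intro power_le_one) auto
  then show ?thesis using assms unfolding hh_def by (intro mult_nonneg_nonneg) auto
qed

definition Yv :: "nat \<Rightarrow> real \<Rightarrow> real \<Rightarrow> real" where
  "Yv q v x = (1 - x) * x powr v * (1 / (v + 1) - x^q / (v + real q + 1))"

lemma Yv_nonneg:
  assumes "0 \<le> x" "x \<le> 1" "0 \<le> v"
  shows "0 \<le> Yv q v x"
proof -
  have "x ^ q \<le> 1" using assms by (intro power_le_one) auto
  then have "x^q / (v + real q + 1) \<le> 1 / (v + real q + 1)" using assms
    by (intro divide_right_mono) auto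
  also have "\<dots> \<le> 1 / (v + 1)" using assms by (intro divide_left_mono) auto
  finally show ?thesis using assms unfolding Yv_def by (intro mult_nonneg_nonneg) auto
qed

definition HH :: "nat \<Rightarrow> nat \<Rightarrow> real \<Rightarrow> real \<Rightarrow> real \<Rightarrow> ennreal" where
  "HH q i x y u = ennreal (indicator {0..1} x * indicator {0..1} y * indicator {0..} u * hh q i x y u)"

lemma HH_y:
  "(\<integral>\<^sup>+y. HH q i x y u \<partial>lborel) =
     ennreal (indicator {0..1} x * indicator {0..} u * Yv q (u + real (2*i*q)) x)"
proof (cases "x \<in> {0..1} \<and> u \<in> {0..}")
  case False
  then have "HH q i x y u = 0" for y by (auto simp: HH_def indicator_def)
  with False show ?thesis by (auto simp: indicator_def)
next
  case True
  then have "HH q i x y u = ennreal (hh q i x y u) * indicator {0..1} y" for y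
    by (auto simp: HH_def indicator_def)
  then have "(\<integral>\<^sup>+y. HH q i x y u \<partial>lborel) = (\<integral>\<^sup>+y. ennreal (hh q i x y u) * indicator {0..1} y \<partial>lborel)"
    by simp
  also have "\<dots> = ennreal (Yv q (u + real (2*i*q)) x)"
  proof (rule nn_integral_has_integral_lebesgue')
    show "0 \<le> hh q i x y u" if "y \<in> {0..1}" for y using True that by (intro hh_nonneg) auto
    show "((\<lambda>y. hh q i x y u) has_integral Yv q (u + real (2*i*q)) x) {0..1}"
      unfolding hh_def Yv_def using True by (intro Y_int) auto
  qed
  finally show ?thesis using True by simp
qed

lemma HH_x:
  "(\<integral>\<^sup>+x. ennreal (indicator {0..1} x * indicator {0..} u * Yv q (u + real (2*i*q)) x) \<partial>lborel) =
     ennreal (indicator {0..} u * (GG (u + real (2*i*q)) - GG (u + real (2*i*q) + real q)))"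
proof (cases "u \<in> {0..}")
  case False
  then show ?thesis by (simp add: indicator_def)
next
  case True
  then have "(\<integral>\<^sup>+x. ennreal (indicator {0..1} x * indicator {0..} u * Yv q (u + real (2*i*q)) x) \<partial>lborel)
      = (\<integral>\<^sup>+x. ennreal (Yv q (u + real (2*i*q)) x) * indicator {0..1} x \<partial>lborel)"
    by (intro nn_integral_cong) (auto simp: indicator_def)
  also have "\<dots> = ennreal (GG (u + real (2*i*q)) - GG (u + real (2*i*q) + real q))"
  proof (rule nn_integral_has_integral_lebesgue')
    show "0 \<le> Yv q (u + real (2*i*q)) x" if "x \<in> {0..1}" for x using True that by (intro Yv_nonneg) auto
    show "((\<lambda>x. Yv q (u + real (2*i*q)) x) has_integral (GG (u + real (2*i*q)) - GG (u + real (2*i*q) + real q))) {0..1}"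
      unfolding Yv_def using True by (intro X_int) auto
  qed
  finally show ?thesis using True by simp
qed

lemma HH_u:
  "(\<integral>\<^sup>+u. ennreal (indicator {0..} u * (GG (u + real (2*i*q)) - GG (u + real (2*i*q) + real q))) \<partial>lborel) =
     ennreal (AA (real (2*i*q) + 1) - AA (real (2*i*q) + real q + 1))"
proof -
  have "(\<integral>\<^sup>+u. ennreal (indicator {0..} u * (GG (u + real (2*i*q)) - GG (u + real (2*i*q) + real q))) \<partial>lborel)
     = (\<integral>\<^sup>+u. ennreal (GG (u + real (2*i*q)) - GG (u + real (2*i*q) + real q)) * indicator {0..} u \<partial>lborel)"
    by (intro nn_integral_cong) (auto simp: indicator_def)
  also have "\<dots> = ennreal (AA (real (2*i*q) + 1) - AA (real (2*i*q) + real q + 1))"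
    by (rule U_int) auto
  finally show ?thesis .
qed

lemma P1:
  fixes x y :: real
  assumes x0: "0 \<le> x" and x1: "x \<le> 1" and y0: "0 \<le> y" and y1: "y \<le> 1" and q: "q > 0"
  shows "ennreal ((1 - x) / ((1 + x^q * y^q) * (- ln (x*y)))) =
         (\<Sum>i. \<integral>\<^sup>+u. ennreal (hh q i x y u) * indicator {0..} u \<partial>lborel)"
proof (cases "x = 1 \<or> x * y = 0")
  case True
  then have hh0: "hh q i x y u = 0" for i u by (auto simp: hh_def)
  have z: "(1 - x) / ((1 + x^q * y^q) * (- ln (x*y))) = 0" using True by auto
  show ?thesis unfolding z hh0 by simp
next
  case False
  define t where "t = x * y"
  have t0: "0 < t" using False x0 y0 by (auto simp: t_def)
  have "x * y \<le> x" using x0 y1 by (simp add: mult_left_le)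
  then have t1: "t < 1" using False x1 unfolding t_def by auto
  define s where "s = t ^ q"
  have s0: "0 < s" and s1: "s < 1" using t0 t1 q by (auto simp: s_def power_less_one_iff)
  have lt: "ln t < 0" using t0 t1 by simp
  define C where "C = (1 - x) * (1 - s) / (- ln t)"
  have C0: "0 \<le> C" unfolding C_def by (rule divide_nonneg_pos) (use x1 s1 lt in auto)
  have trm: "(\<integral>\<^sup>+u. ennreal (hh q i x y u) * indicator {0..} u \<partial>lborel) = ennreal (C * (s^2)^i)" for i
  proof -
    have "(\<integral>\<^sup>+u. ennreal (hh q i x y u) * indicator {0..} u \<partial>lborel) =
          (\<integral>\<^sup>+u. ennreal (((1 - x) * (1 - s)) * t powr (u + real (2*i*q))) * indicator {0..} u \<partial>lborel)"
      by (simp add: hh_def t_def s_def)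
    also have "\<dots> = ennreal (((1 - x) * (1 - s)) * t powr (real (2*i*q)) / (- ln t))"
      using x1 s1 t0 t1 by (intro int_u) auto
    also have "t powr (real (2*i*q)) = (s^2)^i"
    proof -
      have "t powr (real (2*i*q)) = t ^ (2*i*q)" using t0 by (rule powr_realpow)
      also have "\<dots> = t ^ (q*2*i)" by (simp add: ac_simps)
      also have "\<dots> = (s^2)^i" by (simp only: s_def power_mult)
      finally show ?thesis .
    qed
    finally show ?thesis by (simp add: C_def)
  qed
  have s2: "s^2 < 1" using s0 s1 by (simp add: power_less_one_iff)
  have gs: "(\<lambda>i. C * (s^2)^i) sums (C * (1 / (1 - s^2)))"
    using s2 s0 by (intro sums_mult geometric_sums) auto
  have "(\<Sum>i. \<integral>\<^sup>+u. ennreal (hh q i x y u) * indicator {0..} u \<partial>lborel) = (\<Sum>i. ennreal (C * (s^2)^i))"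
    by (simp add: trm)
  also have "\<dots> = ennreal (\<Sum>i. C * (s^2)^i)"
    using C0 s0 gs by (intro suminf_ennreal2) (auto simp: sums_iff)
  also have "(\<Sum>i. C * (s^2)^i) = C * (1 / (1 - s^2))" using gs by (simp add: sums_iff)
  also have "\<dots> = (1 - x) / ((1 + x^q * y^q) * (- ln (x*y)))"
  proof -
    have "1 - s^2 = (1 - s) * (1 + s)" by (simp add: power2_eq_square algebra_simps)
    moreover have "x^q * y^q = s" by (simp add: s_def t_def power_mult_distrib)
    moreover have "(1 - x) * (1 - s) / (- ln t) * (1 / ((1 - s) * (1 + s))) = (1 - x) / ((1 + s) * (- ln t))"
      using s1 s0 by (simp add: divide_simps)
    ultimately show ?thesis by (simp add: C_def t_def)
  qed
  finally show ?thesis ..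
qed

lemma P1':
  fixes x y :: real
  assumes q: "q > 0"
  shows "ennreal (indicator {0..1} x * indicator {0..1} y * ((1 - x) / ((1 + x^q * y^q) * (- ln (x*y))))) =
         (\<Sum>i. \<integral>\<^sup>+u. HH q i x y u \<partial>lborel)"
proof (cases "x \<in> {0..1} \<and> y \<in> {0..1}")
  case False
  then have "HH q i x y u = 0" for i u by (auto simp: HH_def indicator_def)
  with False show ?thesis by (auto simp: indicator_def)
next
  case True
  then have "HH q i x y u = ennreal (hh q i x y u) * indicator {0..} u" for i u
    by (auto simp: HH_def indicator_def)
  then have "(\<Sum>i. \<integral>\<^sup>+u. HH q i x y u \<partial>lborel) = (\<Sum>i. \<integral>\<^sup>+u. ennreal (hh q i x y u) * indicator {0..} u \<partial>lborel)"
    by simp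
  also have "\<dots> = ennreal ((1 - x) / ((1 + x^q * y^q) * (- ln (x*y))))"
    using True q by (intro P1[symmetric]) auto
  finally show ?thesis using True by simp
qed

lemma C_main:
  assumes q: "q > 0"
  shows "(\<integral>\<^sup>+z. ennreal (indicator ({0..1::real} \<times> {0..1::real}) z *
            (case z of (x, y) \<Rightarrow> (1 - x) / ((1 + x ^ q * y ^ q) * (- ln (x * y))))) \<partial>lborel)
         = (\<Sum>i. ennreal (AA (real (2*i*q) + 1) - AA (real (2*i*q) + real q + 1)))"
proof -
  have "(\<integral>\<^sup>+z. ennreal (indicator ({0..1::real} \<times> {0..1::real}) z *
            (case z of (x, y) \<Rightarrow> (1 - x) / ((1 + x ^ q * y ^ q) * (- ln (x * y))))) \<partial>lborel)
      = (\<integral>\<^sup>+z. ennreal (indicator ({0..1::real} \<times> {0..1::real}) z *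
            (case z of (x, y) \<Rightarrow> (1 - x) / ((1 + x ^ q * y ^ q) * (- ln (x * y))))) \<partial>(lborel \<Otimes>\<^sub>M lborel))"
    by (simp only: lborel_prod)
  also have "\<dots> = (\<integral>\<^sup>+x. \<integral>\<^sup>+y. ennreal (indicator {0..1} x * indicator {0..1} y * ((1 - x) / ((1 + x^q * y^q) * (- ln (x*y))))) \<partial>lborel \<partial>lborel)"
    by (subst lborel.nn_integral_fst[symmetric]) (auto simp: indicator_times)
  also have "\<dots> = (\<integral>\<^sup>+x. \<integral>\<^sup>+y. (\<Sum>i. \<integral>\<^sup>+u. HH q i x y u \<partial>lborel) \<partial>lborel \<partial>lborel)"
    using q by (simp only: P1')
  also have "\<dots> = (\<integral>\<^sup>+x. (\<Sum>i. \<integral>\<^sup>+y. \<integral>\<^sup>+u. HH q i x y u \<partial>lborel \<partial>lborel) \<partial>lborel)"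
    by (intro nn_integral_cong nn_integral_suminf) (simp add: HH_def hh_def)
  also have "\<dots> = (\<Sum>i. \<integral>\<^sup>+x. \<integral>\<^sup>+y. \<integral>\<^sup>+u. HH q i x y u \<partial>lborel \<partial>lborel \<partial>lborel)"
    by (intro nn_integral_suminf) (simp add: HH_def hh_def)
  also have "\<dots> = (\<Sum>i. \<integral>\<^sup>+u. \<integral>\<^sup>+x. \<integral>\<^sup>+y. HH q i x y u \<partial>lborel \<partial>lborel \<partial>lborel)"
  proof (intro suminf_cong)
    fix i
    have "(\<integral>\<^sup>+x. \<integral>\<^sup>+y. \<integral>\<^sup>+u. HH q i x y u \<partial>lborel \<partial>lborel \<partial>lborel)
        = (\<integral>\<^sup>+x. \<integral>\<^sup>+u. \<integral>\<^sup>+y. HH q i x y u \<partial>lborel \<partial>lborel \<partial>lborel)"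
      by (intro nn_integral_cong lborel_pair.Fubini') (simp add: HH_def hh_def)
    also have "\<dots> = (\<integral>\<^sup>+u. \<integral>\<^sup>+x. \<integral>\<^sup>+y. HH q i x y u \<partial>lborel \<partial>lborel \<partial>lborel)"
      by (intro lborel_pair.Fubini'[symmetric]) (simp add: HH_def hh_def)
    finally show "(\<integral>\<^sup>+x. \<integral>\<^sup>+y. \<integral>\<^sup>+u. HH q i x y u \<partial>lborel \<partial>lborel \<partial>lborel)
        = (\<integral>\<^sup>+u. \<integral>\<^sup>+x. \<integral>\<^sup>+y. HH q i x y u \<partial>lborel \<partial>lborel \<partial>lborel)" .
  qed
  also have "\<dots> = (\<Sum>i. ennreal (AA (real (2*i*q) + 1) - AA (real (2*i*q) + real q + 1)))"
    by (simp only: HH_y HH_x HH_u)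
  finally show ?thesis .
qed



lemma ln_sum_lgs:
  fixes z :: real
  assumes z: "z > 0"
  shows "(\<Sum>i<Suc N. ln (real i + z)) = z * ln (real N) - ln_Gamma_series z N + ln (fact N)"
proof (induction N)
  case 0
  then show ?case by (simp add: ln_Gamma_series_def)
next
  case (Suc N)
  have f: "ln (fact (Suc N) :: real) = ln (real (Suc N)) + ln (fact N)"
    by (simp add: fact_Suc ln_mult del: of_nat_Suc)
  have l: "ln (z / real (Suc N) + 1) + ln (real (Suc N)) = ln (real (Suc N) + z)"
  proof -
    have "ln (z / real (Suc N) + 1) + ln (real (Suc N)) = ln ((z / real (Suc N) + 1) * real (Suc N))"
    proof -
      have "z / real (Suc N) > 0" using z by (intro divide_pos_pos) auto
      then have "z / real (Suc N) + 1 > 0" by linarith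
      then show ?thesis by (subst ln_mult) auto
    qed
    also have "(z / real (Suc N) + 1) * real (Suc N) = real (Suc N) + z"
      by (simp add: field_simps del: of_nat_Suc)
    finally show ?thesis .
  qed
  have g: "ln_Gamma_series z (Suc N) = ln_Gamma_series z N + z * ln (real (Suc N)) - z * ln (real N)
             - ln (z / real (Suc N) + 1)"
    by (simp add: ln_Gamma_series_def del: of_nat_Suc)
  have "(\<Sum>i<Suc (Suc N). ln (real i + z)) = (\<Sum>i<Suc N. ln (real i + z)) + ln (real (Suc N) + z)"
    by simp
  also have "\<dots> = z * ln (real N) - ln_Gamma_series z N + ln (fact N) + ln (real (Suc N) + z)"
    by (simp only: Suc.IH)
  also have "\<dots> = z * ln (real (Suc N)) - ln_Gamma_series z (Suc N) + ln (fact (Suc N))"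
    unfolding g f using l by (simp add: algebra_simps del: of_nat_Suc)
  finally show ?case .
qed


lemma B_sums:
  fixes q :: nat
  assumes q: "q > 0"
  defines "R \<equiv> 1 / (2 * real q) * (Digamma ((real q + 1) / (2 * real q)) - Digamma (1 / (2 * real q)))
              - ln ((Gamma (1 / (2 * real q)) * Gamma ((real q + 2) / (2 * real q)))
                    / (Gamma (1 / real q) * Gamma ((real q + 1) / (2 * real q))))"
  shows "(\<lambda>i. AA (real (2*i*q) + 1) - AA (real (2*i*q) + real q + 1)) sums R"
proof -
  define Q where "Q = real q"
  have Q: "Q > 0" using q by (simp add: Q_def)
  define \<alpha> where "\<alpha> = 1 / (2 * Q)"
  define \<beta> where "\<beta> = 1 / Q"
  define \<gamma> where "\<gamma> = (Q + 1) / (2 * Q)"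
  define \<delta> where "\<delta> = (Q + 2) / (2 * Q)"
  have pos: "\<alpha> > 0" "\<beta> > 0" "\<gamma> > 0" "\<delta> > 0" using Q by (auto simp: \<alpha>_def \<beta>_def \<gamma>_def \<delta>_def)
  define t where "t i = AA (real (2*i*q) + 1) - AA (real (2*i*q) + real q + 1)" for i
  have t_eq: "t i = 1 / (2 * Q) * (inverse (\<alpha> + real i) - inverse (\<gamma> + real i)) +
      (ln (real i + \<alpha>) - ln (real i + \<beta>) - ln (real i + \<gamma>) + ln (real i + \<delta>))" for i
  proof -
    have r: "real (2*i*q) = 2 * Q * real i" by (simp add: Q_def)
    have i0: "real i \<ge> 0" by simp
    have A1: "1 / (2 * Q * real i + 1) = 1 / (2 * Q) * inverse (\<alpha> + real i)"
      using Q i0 by (simp add: \<alpha>_def field_simps)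
    have B1: "1 / (2 * Q * real i + Q + 1) = 1 / (2 * Q) * inverse (\<gamma> + real i)"
      using Q i0 by (simp add: \<gamma>_def field_simps)
    have A2: "ln ((2 * Q * real i + 1 + 1) / (2 * Q * real i + 1)) = ln (real i + \<beta>) - ln (real i + \<alpha>)"
    proof -
      have n1: "2 * Q * real i + 1 + 1 = (2 * Q) * (real i + \<beta>)" and n2: "2 * Q * real i + 1 = (2 * Q) * (real i + \<alpha>)"
        using Q by (simp_all add: \<alpha>_def \<beta>_def field_simps)
      have "(2 * Q * real i + 1 + 1) / (2 * Q * real i + 1) = ((2 * Q) * (real i + \<beta>)) / ((2 * Q) * (real i + \<alpha>))"
        by (simp only: n1[symmetric] n2[symmetric])
      also have "\<dots> = (real i + \<beta>) / (real i + \<alpha>)" using Q by (intro mult_divide_mult_cancel_left) simp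
      finally have "(2 * Q * real i + 1 + 1) / (2 * Q * real i + 1) = (real i + \<beta>) / (real i + \<alpha>)" .
      then show ?thesis using pos i0 by (simp add: ln_div add_nonneg_pos)
    qed
    have B2: "ln ((2 * Q * real i + Q + 1 + 1) / (2 * Q * real i + Q + 1)) = ln (real i + \<delta>) - ln (real i + \<gamma>)"
    proof -
      have n1: "2 * Q * real i + Q + 1 + 1 = (2 * Q) * (real i + \<delta>)" and n2: "2 * Q * real i + Q + 1 = (2 * Q) * (real i + \<gamma>)"
        using Q by (simp_all add: \<gamma>_def \<delta>_def field_simps)
      have "(2 * Q * real i + Q + 1 + 1) / (2 * Q * real i + Q + 1) = ((2 * Q) * (real i + \<delta>)) / ((2 * Q) * (real i + \<gamma>))"
        by (simp only: n1[symmetric] n2[symmetric])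
      also have "\<dots> = (real i + \<delta>) / (real i + \<gamma>)" using Q by (intro mult_divide_mult_cancel_left) simp
      finally have "(2 * Q * real i + Q + 1 + 1) / (2 * Q * real i + Q + 1) = (real i + \<delta>) / (real i + \<gamma>)" .
      then show ?thesis using pos i0 by (simp add: ln_div add_nonneg_pos)
    qed
    show ?thesis unfolding t_def AA_def r Q_def[symmetric] A1 B1 A2 B2 by (simp add: diff_divide_distrib)
  qed
  have D: "(\<lambda>m. ln (real m) - (\<Sum>n<m. inverse (z + real n))) \<longlonglongrightarrow> Digamma z" if "z > 0" for z :: real
    using Digamma_LIMSEQ[of z] that by simp
  have LG: "ln_Gamma_series z \<longlonglongrightarrow> ln (Gamma z)" if "z > 0" for z :: real
    using ln_Gamma_real_LIMSEQ[OF that] ln_Gamma_real_pos[OF that] by simp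
  have lim: "(\<lambda>n. 1 / (2 * Q) * ((ln (real (Suc n)) - (\<Sum>i<Suc n. inverse (\<gamma> + real i)))
                              - (ln (real (Suc n)) - (\<Sum>i<Suc n. inverse (\<alpha> + real i))))
            + (- ln_Gamma_series \<alpha> n + ln_Gamma_series \<beta> n + ln_Gamma_series \<gamma> n - ln_Gamma_series \<delta> n))
        \<longlonglongrightarrow> 1 / (2 * Q) * (Digamma \<gamma> - Digamma \<alpha>)
            + (- ln (Gamma \<alpha>) + ln (Gamma \<beta>) + ln (Gamma \<gamma>) - ln (Gamma \<delta>))"
    using pos by (intro tendsto_intros LIMSEQ_Suc[OF D] LG)
  have seq: "(\<Sum>i<Suc n. t i) = 1 / (2 * Q) * ((ln (real (Suc n)) - (\<Sum>i<Suc n. inverse (\<gamma> + real i)))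
                              - (ln (real (Suc n)) - (\<Sum>i<Suc n. inverse (\<alpha> + real i))))
            + (- ln_Gamma_series \<alpha> n + ln_Gamma_series \<beta> n + ln_Gamma_series \<gamma> n - ln_Gamma_series \<delta> n)" for n
  proof -
    have "(\<Sum>i<Suc n. t i) = 1 / (2 * Q) * ((\<Sum>i<Suc n. inverse (\<alpha> + real i)) - (\<Sum>i<Suc n. inverse (\<gamma> + real i)))
       + ((\<Sum>i<Suc n. ln (real i + \<alpha>)) - (\<Sum>i<Suc n. ln (real i + \<beta>)) - (\<Sum>i<Suc n. ln (real i + \<gamma>)) + (\<Sum>i<Suc n. ln (real i + \<delta>)))"
      unfolding t_eq by (simp only: sum.distrib sum_subtractf flip: sum_distrib_left)
    also have "\<dots> = 1 / (2 * Q) * ((\<Sum>i<Suc n. inverse (\<alpha> + real i)) - (\<Sum>i<Suc n. inverse (\<gamma> + real i)))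
       + ((\<alpha> - \<beta> - \<gamma> + \<delta>) * ln (real n) - ln_Gamma_series \<alpha> n + ln_Gamma_series \<beta> n + ln_Gamma_series \<gamma> n - ln_Gamma_series \<delta> n)"
      unfolding ln_sum_lgs[OF pos(1)] ln_sum_lgs[OF pos(2)] ln_sum_lgs[OF pos(3)] ln_sum_lgs[OF pos(4)] by (simp add: algebra_simps)
    also have "\<alpha> - \<beta> - \<gamma> + \<delta> = 0" using Q by (simp add: \<alpha>_def \<beta>_def \<gamma>_def \<delta>_def field_simps)
    finally show ?thesis by simp
  qed
  have Rv: "R = 1 / (2 * Q) * (Digamma \<gamma> - Digamma \<alpha>)
            + (- ln (Gamma \<alpha>) + ln (Gamma \<beta>) + ln (Gamma \<gamma>) - ln (Gamma \<delta>))"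
  proof -
    have g: "Gamma \<alpha> > 0" "Gamma \<beta> > 0" "Gamma \<gamma> > 0" "Gamma \<delta> > 0" using pos by auto
    have "ln ((Gamma \<alpha> * Gamma \<delta>) / (Gamma \<beta> * Gamma \<gamma>)) = ln (Gamma \<alpha>) + ln (Gamma \<delta>) - ln (Gamma \<beta>) - ln (Gamma \<gamma>)"
      using g by (simp add: ln_div ln_mult)
    then show ?thesis unfolding R_def \<alpha>_def \<beta>_def \<gamma>_def \<delta>_def Q_def by simp
  qed
  have "(\<lambda>n. \<Sum>i<Suc n. t i) \<longlonglongrightarrow> R" unfolding seq Rv by (rule lim)
  then have "(\<lambda>n. \<Sum>i<n. t i) \<longlonglongrightarrow> R" by (rule LIMSEQ_imp_Suc)
  then show ?thesis unfolding sums_def t_def .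
qed

lemma AA_bounds:
  assumes c: "c \<ge> 1"
  shows "0 \<le> AA c" "AA c \<le> 1 / c^2"
proof -
  define t where "t = 1 / c"
  have t0: "0 \<le> t" "t \<le> 1" using c by (auto simp: t_def)
  have e: "(c + 1) / c = 1 + t" using c by (simp add: t_def field_simps)
  have "AA c = t - ln (1 + t)" by (simp add: AA_def e t_def)
  moreover have "ln (1 + t) \<le> t" using t0 by (intro ln_add_one_self_le_self)
  moreover have "t - t^2 \<le> ln (1 + t)" using t0 by (intro ln_one_plus_pos_lower_bound)
  moreover have "t^2 = 1 / c^2" by (simp add: t_def power_divide)
  ultimately show "0 \<le> AA c" "AA c \<le> 1 / c^2" by linarith+
qed

lemma coeff_eq: "(1 / of_nat (m + 1) - of_real (ln (real (m + 2) / real (m + 1))) :: complex) = of_real (AA (real m + 1))"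
  by (simp add: AA_def add.commute add.left_commute)

lemma summable_AA: "summable (\<lambda>m. AA (real m + 1))"
proof (rule summable_comparison_test')
  show "summable (\<lambda>m. inverse (real (Suc m) ^ 2))"
    using inverse_power_summable[of 2, where 'a=real] by (subst summable_Suc_iff) simp
  show "norm (AA (real m + 1)) \<le> inverse (real (Suc m) ^ 2)" for m
    using AA_bounds[of "real m + 1"] by (simp add: divide_inverse add.commute)
qed

lemma gs_summable:
  assumes "norm z \<le> (1::real)"
  shows "summable (\<lambda>m. z ^ m * (1 / of_nat (m + 1) - of_real (ln (real (m + 2) / real (m + 1))) :: complex))"
proof (rule summable_comparison_test'[OF summable_AA])
  fix m :: nat
  have "norm (z ^ m) \<le> 1" using assms by (simp add: norm_power power_le_one)
  then show "norm (z ^ m * (1 / of_nat (m + 1) - of_real (ln (real (m + 2) / real (m + 1))))) \<le> AA (real m + 1)"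
    unfolding coeff_eq norm_mult using AA_bounds[of "real m + 1"]
    by (simp add: mult_left_le_one_le)
qed


lemma roots_sum:
  fixes q :: nat
  assumes q: "q > 0"
  defines "\<omega> \<equiv> exp (\<i> * of_real pi / of_nat q)"
  shows "(\<Sum>k<q. (\<omega> ^ (2 * k + 1)) ^ m) = (if q dvd m then of_nat q * (-1) ^ (m div q) else 0)"
proof -
  have wq: "\<omega> ^ q = -1"
  proof -
    have "\<omega> ^ q = exp (of_nat q * (\<i> * of_real pi / of_nat q))" unfolding \<omega>_def by (simp only: exp_of_nat_mult)
    also have "of_nat q * (\<i> * of_real pi / of_nat q) = \<i> * of_real pi" using q by simp
    finally show ?thesis by simp
  qed
  have split: "(\<omega> ^ (2 * k + 1)) ^ m = \<omega> ^ m * (\<omega> ^ (2 * m)) ^ k" for k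
    by (simp add: power_mult[symmetric] power_add[symmetric] algebra_simps)
  have S: "(\<Sum>k<q. (\<omega> ^ (2 * k + 1)) ^ m) = \<omega> ^ m * (\<Sum>k<q. (\<omega> ^ (2 * m)) ^ k)"
    by (simp only: split sum_distrib_left)
  show ?thesis
  proof (cases "q dvd m")
    case True
    then obtain j where j: "m = q * j" by blast
    have a1: "\<omega> ^ m = (-1) ^ (m div q)" using q by (simp add: j power_mult wq)
    have a2: "\<omega> ^ (2 * m) = 1" by (simp add: j power_mult wq mult.left_commute[of 2])
    show ?thesis unfolding S a1 a2 using True by simp
  next
    case False
    have ne: "\<omega> ^ (2 * m) \<noteq> 1"
    proof
      assume "\<omega> ^ (2 * m) = 1"
      then have "exp (of_nat (2 * m) * (\<i> * of_real pi / of_nat q)) = 1"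
        unfolding \<omega>_def by (simp only: exp_of_nat_mult)
      then obtain n :: int where n: "Im (of_nat (2 * m) * (\<i> * of_real pi / of_nat q)) = of_int (2 * n) * pi"
        by (auto simp: exp_eq_1)
      then have "2 * real m * pi / real q = 2 * real_of_int n * pi" by simp
      then have "real m = real q * real_of_int n" using q by (simp add: field_simps)
      then have "int m = int q * n" by (metis of_int_eq_iff of_int_mult of_int_of_nat_eq)
      then have "int q dvd int m" by simp
      then show False using False by simp
    qed
    have "(\<omega> ^ (2 * m)) ^ q = \<omega> ^ (2 * m * q)" by (rule power_mult[symmetric])
    also have "\<dots> = \<omega> ^ (q * (2 * m))" by (metis mult.commute)
    also have "\<dots> = (\<omega> ^ q) ^ (2 * m)" by (rule power_mult)
    also have "\<dots> = 1" unfolding wq by (simp add: power_mult)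
    finally have "(\<omega> ^ (2 * m)) ^ q = 1" .
    then have "(\<Sum>k<q. (\<omega> ^ (2 * m)) ^ k) = 0" using ne by (simp add: sum_gp_strict)
    then show ?thesis unfolding S using False by simp
  qed
qed


lemma AA_anti:
  assumes "0 \<le> w" "w \<le> w'"
  shows "AA (w' + 1) \<le> AA (w + 1)"
proof -
  have "Phi w \<le> Phi w'"
  proof (rule DERIV_nonneg_imp_nondecreasing[OF assms(2)])
    fix x assume "w \<le> x" "x \<le> w'"
    then show "\<exists>y. (Phi has_real_derivative y) (at x) \<and> 0 \<le> y"
      using assms by (intro exI[of _ "GG x"]) (auto intro: Phi_deriv GG_nonneg)
  qed
  then show ?thesis using assms by (simp add: Phi_AA)
qed

theorem theorem34:
  fixes q :: nat
  assumes "q > 0"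
  defines "\<omega> \<equiv> exp (\<i> * of_real pi / of_nat q)"
  defines "R \<equiv> 1 / (2 * real q) * (Digamma ((real q + 1) / (2 * real q)) - Digamma (1 / (2 * real q)))
              - ln ((Gamma (1 / (2 * real q)) * Gamma ((real q + 2) / (2 * real q)))
                    / (Gamma (1 / real q) * Gamma ((real q + 1) / (2 * real q))))"
  shows "1 / of_nat q * (\<Sum>k<q. gamma_series (\<omega> ^ (2 * k + 1))) = complex_of_real R
         \<and> ((\<lambda>(x, y). (1 - x) / ((1 + x ^ q * y ^ q) * (- ln (x * y)))) has_integral R)
             ({0..1::real} \<times> {0..1::real})"
proof -
  have q: "q > 0" by fact
  define t where "t i = AA (real (2*i*q) + 1) - AA (real (2*i*q) + real q + 1)" for i
  have tsums: "t sums R" unfolding t_def R_def using q by (rule B_sums)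
  have t0: "0 \<le> t i" for i unfolding t_def using AA_anti[of "real (2*i*q)" "real (2*i*q) + real q"] by simp
  define a where "a j = AA (real (q * j) + 1)" for j
  define c where "c m = (1 / of_nat (m + 1) - of_real (ln (real (m + 2) / real (m + 1))) :: complex)" for m
  have c_eq: "c m = of_real (AA (real m + 1))" for m unfolding c_def by (rule coeff_eq)
  have "\<i> * complex_of_real pi / of_nat q = \<i> * complex_of_real (pi / real q)" by simp
  then have n1: "norm \<omega> = 1" unfolding \<omega>_def by (simp only: norm_exp_eq_Re) simp
  have nw: "norm (\<omega> ^ (2 * k + 1)) \<le> 1" for k
    unfolding norm_power n1 by simp
  have summ: "summable (\<lambda>m. (\<omega> ^ (2 * k + 1)) ^ m * c m)" for k
    unfolding c_def by (rule gs_summable[OF nw])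
  define F where "F m = (\<Sum>k<q. (\<omega> ^ (2 * k + 1)) ^ m * c m)" for m
  have F_eq: "F m = c m * (if q dvd m then of_nat q * (-1) ^ (m div q) else 0)" for m
    unfolding F_def using roots_sum[OF q, of m]
    by (simp add: \<omega>_def sum_distrib_left[symmetric] mult.commute)
  have sumF: "summable F" unfolding F_def by (intro summable_sum summ)
  define S where "S = suminf F"
  have gsS: "(\<Sum>k<q. gamma_series (\<omega> ^ (2 * k + 1))) = S"
    unfolding S_def F_def gamma_series_def c_def[symmetric]
    using summ by (subst suminf_sum) auto
  have FS: "F sums S" using sumF by (simp add: S_def summable_sums)
  have "(\<lambda>j. F (q * j)) sums S"
  proof (subst sums_mono_reindex)
    show "strict_mono (\<lambda>j. q * j)" using q by (intro strict_monoI) auto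
    show "F n = 0" if "n \<notin> range (\<lambda>j. q * j)" for n
      using that by (auto simp: F_eq)
  qed (rule FS)
  then have "(\<lambda>j. F (q * j) / of_nat q) sums (S / of_nat q)" by (rule sums_divide)
  moreover have "F (q * j) / of_nat q = of_real ((-1) ^ j * a j)" for j
    using q by (simp add: F_eq c_eq a_def)
  ultimately have h1: "(\<lambda>j. complex_of_real ((-1) ^ j * a j)) sums (S / of_nat q)" by simp
  from sums_Re[OF h1] have h2: "(\<lambda>j. (-1) ^ j * a j) sums Re (S / of_nat q)" by simp
  from sums_group[OF h2, of 2] have "(\<lambda>n. \<Sum>j\<in>{n * 2..<n * 2 + 2}. (-1) ^ j * a j) sums Re (S / of_nat q)"
    by simp
  moreover have "(\<Sum>j\<in>{n * 2..<n * 2 + 2}. (-1) ^ j * a j) = t n" for n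
  proof -
    have "{n * 2..<n * 2 + 2} = {2 * n, 2 * n + 1}" by auto
    then have "(\<Sum>j\<in>{n * 2..<n * 2 + 2}. (-1) ^ j * a j) = a (2 * n) - a (2 * n + 1)" by simp
    also have "\<dots> = t n" unfolding a_def t_def by (simp add: algebra_simps)
    finally show ?thesis .
  qed
  ultimately have "t sums Re (S / of_nat q)" by simp
  then have ReS: "Re (S / of_nat q) = R" using tsums by (rule sums_unique2)
  have "S / of_nat q = of_real (Re (S / of_nat q))"
    using h1 sums_of_real[OF h2] by (rule sums_unique2)
  then have part1: "1 / of_nat q * (\<Sum>k<q. gamma_series (\<omega> ^ (2 * k + 1))) = complex_of_real R"
    unfolding gsS ReS by simp
  define f where "f = (\<lambda>z. indicator ({0..1::real} \<times> {0..1::real}) z *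
            (case z of (x, y) \<Rightarrow> (1 - x) / ((1 + x ^ q * y ^ q) * (- ln (x * y)))))"
  have R0: "0 \<le> R" using tsums t0 by (metis sums_iff suminf_nonneg)
  have "(\<integral>\<^sup>+z. ennreal (f z) \<partial>lborel) = (\<Sum>i. ennreal (t i))"
    unfolding f_def t_def using q by (rule C_main)
  also have "\<dots> = ennreal (\<Sum>i. t i)" using t0 tsums by (intro suminf_ennreal2) (auto simp: sums_iff)
  also have "(\<Sum>i. t i) = R" using tsums by (simp add: sums_iff)
  finally have nnI: "(\<integral>\<^sup>+z. ennreal (f z) \<partial>lborel) = ennreal R" .
  have fnn: "0 \<le> f z" for z
  proof (cases "z \<in> {0..1::real} \<times> {0..1::real}")
    case True
    then obtain x y where z: "z = (x, y)" and xy: "0 \<le> x" "x \<le> 1" "0 \<le> y" "y \<le> 1" by auto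
    have "x * y \<le> 1" using xy by (simp add: mult_le_one)
    then have "ln (x * y) \<le> 0" using xy by (cases "x * y = 0") auto
    moreover have "0 < 1 + x ^ q * y ^ q" using xy by (simp add: add_pos_nonneg)
    ultimately have "0 \<le> (1 + x ^ q * y ^ q) * (- ln (x * y))" by (intro mult_nonneg_nonneg) auto
    then have "0 \<le> (1 - x) / ((1 + x ^ q * y ^ q) * (- ln (x * y)))"
      using xy by (intro divide_nonneg_nonneg) auto
    then show ?thesis using True unfolding f_def z by simp
  qed (simp add: f_def)
  have feq: "f = (\<lambda>(x, y). indicator {0..1::real} x * indicator {0..1::real} y *
       ((1 - x) / ((1 + x ^ q * y ^ q) * (- ln (x * y)))))"
    by (auto simp: f_def fun_eq_iff indicator_times)
  have "(\<lambda>(x::real, y::real). indicator {0..1::real} x * indicator {0..1::real} y *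
       ((1 - x) / ((1 + x ^ q * y ^ q) * (- ln (x * y))))) \<in> borel_measurable (lborel \<Otimes>\<^sub>M lborel)"
    by measurable
  then have "f \<in> borel_measurable lborel" unfolding feq lborel_prod .
  then have fm: "f \<in> borel_measurable borel" by simp
  have "(f has_integral R) UNIV" using fm fnn nnI R0 by (rule nn_integral_has_integral)
  moreover have "f = (\<lambda>z. if z \<in> {0..1::real} \<times> {0..1::real} then
          (\<lambda>(x, y). (1 - x) / ((1 + x ^ q * y ^ q) * (- ln (x * y)))) z else 0)"
    by (auto simp: f_def fun_eq_iff)
  ultimately have part2: "((\<lambda>(x, y). (1 - x) / ((1 + x ^ q * y ^ q) * (- ln (x * y)))) has_integral R)
             ({0..1::real} \<times> {0..1::real})"
    by (simp add: has_integral_restrict_UNIV)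
  show ?thesis using part1 part2 by blast
qed

end
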